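(* Let $t\in\mathbb{Z}_+$ and $\alpha\in(0,1)$. Let $\mathcal{Q}_1,\dots,\mathcal{Q}_t$ be probability distributions on $\mathbb{R}$ with continuous CDFs $F_1,\dots,F_t$. Let $\mathcal{D}_1,\dots,\mathcal{D}_t$ be independent datasets, where $\mathcal{D}_j=\{u_{j,i}\}_{i=1}^{B_j}$ consists of $B_j\ge 1$ i.i.d. samples from $\mathcal{Q}_j$. Suppose $1\le i\le k\le t$ and $\delta\in(0,1)$. Then with probability at least $1-\delta$, $$\big|\widehat{F}_{t,i}(\widehat{q}_{t,k})-(1-\alpha)\big|\le \frac{12}{5}\phi(t,k)+\frac{6}{5}\psi(t,k,\delta/2)+\frac{4}{5}\psi(t,i,\delta/2).$$
   Context: For a CDF $F$ and $\gamma\in(0,1)$, the left $\gamma$-quantile is $\mathsf{Q}^-_\gamma(F)=\inf\{x\in\mathbb{R}:F(x)\ge\gamma\}$. For $m\in\{1,\dots,t\}$ let $B_{t,m}=\sum_{j=t-m+1}^t B_j$ and $\widehat{F}_{t,m}(x)=\frac{1}{B_{t,m}}\sum_{j=t-m+1}^t\sum_{l=1}^{B_j}\mathbf{1}\{x\ge u_{j,l}\}$. Define $\widehat{q}_{t,m}=\mathsf{Q}^-_{1-\alpha}(\widehat{F}_{t,m})$, $\phi(t,m)=\max_{t-m+1\le j\le t}\|F_j-F_t\|_\infty$, and $\psi(t,m,\delta)=\frac{5}{4}\sqrt{\frac{2\alpha(1-\alpha)\log(2/\delta)}{B_{t,m}}}+\frac{4\log(2/\delta)}{B_{t,m}}$.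 *)

theory Defs
  imports "HOL-Probability.Probability"
begin

definition left_quantile :: "(real \<Rightarrow> real) \<Rightarrow> real \<Rightarrow> real" where
  "left_quantile F \<gamma> = Inf {x. F x \<ge> \<gamma>}"

definition Bwin :: "(nat \<Rightarrow> nat) \<Rightarrow> nat \<Rightarrow> nat \<Rightarrow> nat" where
  "Bwin B t m = (\<Sum>j\<in>{t-m+1..t}. B j)"

text \<open>Empirical CDF over the window, for realised sample values w j l (dataset j, sample l).\<close>
definition emp_cdf :: "(nat \<Rightarrow> nat) \<Rightarrow> (nat \<Rightarrow> nat \<Rightarrow> real) \<Rightarrow> nat \<Rightarrow> nat \<Rightarrow> real \<Rightarrow> real" where
  "emp_cdf B w t m x =
     (1 / real (Bwin B t m)) *
       (\<Sum>j\<in>{t-m+1..t}. \<Sum>l\<in>{1..B j}. (if x \<ge> w j l then 1 else 0))"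

definition emp_quantile :: "(nat \<Rightarrow> nat) \<Rightarrow> (nat \<Rightarrow> nat \<Rightarrow> real) \<Rightarrow> real \<Rightarrow> nat \<Rightarrow> nat \<Rightarrow> real" where
  "emp_quantile B w \<alpha> t m = left_quantile (emp_cdf B w t m) (1 - \<alpha>)"

definition sup_dist :: "(real \<Rightarrow> real) \<Rightarrow> (real \<Rightarrow> real) \<Rightarrow> real" where
  "sup_dist F G = (SUP x. \<bar>F x - G x\<bar>)"

definition phi :: "(nat \<Rightarrow> real \<Rightarrow> real) \<Rightarrow> nat \<Rightarrow> nat \<Rightarrow> real" where
  "phi F t m = Max ((\<lambda>j. sup_dist (F j) (F t)) ` {t-m+1..t})"

definition psi :: "(nat \<Rightarrow> nat) \<Rightarrow> real \<Rightarrow> nat \<Rightarrow> nat \<Rightarrow> real \<Rightarrow> real" where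
  "psi B \<alpha> t m \<delta> =
     5/4 * sqrt (2 * \<alpha> * (1 - \<alpha>) * ln (2 / \<delta>) / real (Bwin B t m))
     + 4 * ln (2 / \<delta>) / real (Bwin B t m)"

end

theory Submission imports Defs begin

lemma fact_ge_3pow: "fact (n+2) \<ge> (2 * 3^n :: real)"
proof (induction n)
  case 0 then show ?case by simp
next
  case (Suc n)
  have "fact (Suc n + 2) = (real n + 3) * (fact (n+2) :: real)"
    by (simp add: algebra_simps)
  also have "\<dots> \<ge> 3 * (2 * 3^n)" using Suc by (intro mult_mono) auto
  finally show ?case by simp
qed

lemma exp_bound3:
  fixes z :: real
  assumes "\<bar>z\<bar> < 3"
  shows "exp z \<le> 1 + z + z\<^sup>2 / (2 * (1 - \<bar>z\<bar>/3))"
proof -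
  have "(\<lambda>n. z^n / fact n) sums exp z"
    using exp_converges[of z] by (simp add: divide_inverse mult.commute)
  hence s1: "(\<lambda>n. z^(n+2) / fact (n+2)) sums (exp z - 1 - z)"
    by (subst sums_iff_shift) (simp add: numeral_2_eq_2)
  have g: "(\<lambda>n. (\<bar>z\<bar>/3)^n) sums (1 / (1 - \<bar>z\<bar>/3))"
    by (rule geometric_sums) (use assms in auto)
  hence s2: "(\<lambda>n. z\<^sup>2/2 * (\<bar>z\<bar>/3)^n) sums (z\<^sup>2/2 * (1 / (1 - \<bar>z\<bar>/3)))"
    by (rule sums_mult)
  have le: "z^(n+2) / fact (n+2) \<le> z\<^sup>2/2 * (\<bar>z\<bar>/3)^n" for n
  proof -
    have "z^(n+2) / fact (n+2) \<le> \<bar>z\<bar>^(n+2) / fact (n+2)"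
      using abs_ge_self[of "z^(n+2)"] by (intro divide_right_mono) (simp_all only: power_abs fact_ge_zero)
    also have "\<dots> \<le> \<bar>z\<bar>^(n+2) / (2 * 3^n)"
      by (intro divide_left_mono fact_ge_3pow) auto
    also have "\<dots> = z\<^sup>2/2 * (\<bar>z\<bar>/3)^n"
      by (simp add: power_add power_divide power2_abs power2_eq_square)
    finally show ?thesis .
  qed
  have "exp z - 1 - z \<le> z\<^sup>2/2 * (1 / (1 - \<bar>z\<bar>/3))"
    by (rule sums_le[OF le s1 s2])
  thus ?thesis by (simp add: field_simps)
qed

lemma bern_mgf:
  fixes p l :: real
  assumes p: "0 \<le> p" "p \<le> 1" and l: "0 \<le> l" "l < 3"
  shows "(1-p)*exp(-l*p) + p*exp(l*(1-p)) \<le> exp(p*(1-p)*(l\<^sup>2/(2*(1-l/3))))"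
proof -
  define c where "c = l\<^sup>2/(2*(1-l/3))"
  have d: "1 - l/3 > 0" using l by simp
  have key: "exp (l*y) \<le> 1 + l*y + y\<^sup>2 * c" if y: "\<bar>y\<bar> \<le> 1" for y
  proof -
    have ay: "\<bar>l*y\<bar> \<le> l" using y l by (simp add: abs_mult mult_left_le)
    hence "\<bar>l*y\<bar> < 3" using l by linarith
    hence "exp (l*y) \<le> 1 + l*y + (l*y)\<^sup>2 / (2*(1-\<bar>l*y\<bar>/3))" by (rule exp_bound3)
    also have "(l*y)\<^sup>2 / (2*(1-\<bar>l*y\<bar>/3)) \<le> (l*y)\<^sup>2 / (2*(1-l/3))"
      using ay d by (intro divide_left_mono) (auto intro!: mult_pos_pos)
    also have "\<dots> = y\<^sup>2 * c" by (simp add: c_def power_mult_distrib)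
    finally show ?thesis by simp
  qed
  have e1: "exp(-l*p) \<le> 1 - l*p + p\<^sup>2 * c" using key[of "-p"] p by simp
  have e2: "exp(l*(1-p)) \<le> 1 + l*(1-p) + (1-p)\<^sup>2 * c" using key[of "1-p"] p by simp
  have "(1-p)*exp(-l*p) + p*exp(l*(1-p)) \<le> (1-p)*(1 - l*p + p\<^sup>2 * c) + p*(1 + l*(1-p) + (1-p)\<^sup>2 * c)"
    using p by (intro add_mono mult_left_mono e1 e2) auto
  also have "\<dots> = 1 + p*(1-p)*c" by (simp add: algebra_simps power2_eq_square)
  also have "\<dots> \<le> exp (p*(1-p)*c)" by (rule exp_ge_add_one_self[unfolded add.commute[of _ 1]])
  finally show ?thesis by (simp add: c_def)
qed

lemma bern_choose:
  fixes V L thr :: real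
  assumes V: "V \<ge> 0" and L: "L > 0" and thr: "sqrt (2*V*L) + 2*L/3 \<le> thr"
  shows "\<exists>l. 0 < l \<and> l < 3 \<and> V*(l\<^sup>2/(2*(1-l/3))) - l*thr \<le> (- L)"
proof (cases "V = 0")
  case True
  then show ?thesis using thr L by (intro exI[of _ "3/2"]) auto
next
  case False
  hence Vp: "V > 0" using V by simp
  have "sqrt (2*V*L) \<ge> 0" using V L by simp
  hence s0: "thr \<ge> 2*L/3" using thr by linarith
  hence sp: "thr > 0" using L by simp
  define D where "D = V + thr/3"
  define l where "l = thr/D"
  have den: "D > 0" using Vp sp by (simp add: D_def)
  have lp: "0 < l" using sp den by (simp add: l_def)
  have l3: "l < 3" unfolding l_def using den Vp by (simp add: pos_divide_less_eq D_def)
  have om: "1 - l/3 = V/D" using den by (simp add: l_def D_def field_simps)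
  have "V*(l\<^sup>2/(2*(1-l/3))) = V*((thr/D)\<^sup>2/(2*(V/D)))" unfolding om by (simp add: l_def)
  also have "\<dots> = thr\<^sup>2/(2*D)" using den Vp by (simp add: power2_eq_square field_simps)
  finally have e1: "V*(l\<^sup>2/(2*(1-l/3))) = thr\<^sup>2/(2*D)" .
  have e2: "l*thr = thr\<^sup>2/D" by (simp add: l_def power2_eq_square)
  have "sqrt (2*V*L) \<le> thr - 2*L/3" using thr by simp
  hence "(sqrt (2*V*L))\<^sup>2 \<le> (thr - 2*L/3)\<^sup>2"
    using V L by (intro power_mono) auto
  hence h: "2*V*L \<le> (thr - 2*L/3)\<^sup>2" using Vp L by simp
  have h2: "2*L/3 * (2*L/3) \<le> thr * (2*L/3)" using s0 L by (intro mult_right_mono) auto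
  have "thr\<^sup>2 \<ge> 2*V*L + 2*thr*L/3" using h h2
    by (simp add: power2_eq_square algebra_simps)
  hence "thr\<^sup>2 \<ge> 2*L*D" by (simp add: D_def algebra_simps)
  hence "thr\<^sup>2/(2*D) \<ge> L" using den by (simp add: pos_le_divide_eq mult_ac)
  hence "V*(l\<^sup>2/(2*(1-l/3))) - l*thr \<le> (- L)" unfolding e1 e2
    using den by (simp add: field_simps)
  thus ?thesis using lp l3 by blast
qed

lemma (in prob_space) bin_expectation:
  fixes Y :: "'a \<Rightarrow> real"
  assumes [measurable]: "Y \<in> borel_measurable M"
    and bin: "\<And>\<omega>. \<omega> \<in> space M \<Longrightarrow> Y \<omega> = 0 \<or> Y \<omega> = 1"
  shows "integrable M Y" "0 \<le> expectation Y" "expectation Y \<le> 1"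
proof -
  show int: "integrable M Y"
  proof (rule integrable_const_bound[where B=1])
    have "\<bar>Y x\<bar> \<le> 1" if "x \<in> space M" for x using bin[OF that] by auto
    thus "AE x in M. norm (Y x) \<le> 1" by (auto intro!: AE_I2)
  qed simp
  have "0 \<le> Y x" if "x \<in> space M" for x using bin[OF that] by auto
  thus "0 \<le> expectation Y"
    by (intro integral_nonneg_AE AE_I2) auto
  have "Y x \<le> 1" if "x \<in> space M" for x using bin[OF that] by auto
  hence "expectation Y \<le> expectation (\<lambda>_. 1)"
    by (intro integral_mono[OF int]) auto
  thus "expectation Y \<le> 1" by (simp add: prob_space)
qed

lemma (in prob_space) bin_mgf:
  assumes [measurable]: "Y \<in> borel_measurable M"
    and bin: "\<And>\<omega>. \<omega> \<in> space M \<Longrightarrow> Y \<omega> = 0 \<or> Y \<omega> = 1"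
    and l: "0 \<le> l" "l < 3"
  shows "(\<integral>\<^sup>+\<omega>. ennreal (exp (l * (Y \<omega> - expectation Y))) \<partial>M)
          \<le> ennreal (exp (expectation Y * (1 - expectation Y) * (l\<^sup>2/(2*(1-l/3)))))"
proof -
  define p where "p = expectation Y"
  note be = bin_expectation[OF assms(1) bin]
  have p: "0 \<le> p" "p \<le> 1" using be by (auto simp: p_def)
  define g where "g \<omega> = exp (-l*p) + (exp (l*(1-p)) - exp (-l*p)) * Y \<omega>" for \<omega>
  have eq: "exp (l * (Y \<omega> - p)) = g \<omega>" if "\<omega> \<in> space M" for \<omega>
    using bin[OF that] by (auto simp: g_def algebra_simps)
  have gint: "integrable M g" unfolding g_def using be(1) by auto
  have gnn: "0 \<le> g \<omega>" if "\<omega> \<in> space M" for \<omega> using eq[OF that] by (metis exp_ge_zero)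
  have "(\<integral>\<^sup>+\<omega>. ennreal (exp (l * (Y \<omega> - p))) \<partial>M) = (\<integral>\<^sup>+\<omega>. ennreal (g \<omega>) \<partial>M)"
    by (intro nn_integral_cong) (simp add: eq)
  also have "\<dots> = ennreal (integral\<^sup>L M g)"
    by (rule nn_integral_eq_integral[OF gint]) (use gnn in \<open>auto intro!: AE_I2\<close>)
  also have "integral\<^sup>L M g = exp (-l*p) + (exp (l*(1-p)) - exp (-l*p)) * p"
    unfolding g_def using be(1) by (simp add: p_def prob_space)
  also have "\<dots> = (1-p)*exp(-l*p) + p*exp(l*(1-p))" by (simp add: algebra_simps)
  also have "ennreal \<dots> \<le> ennreal (exp(p*(1-p)*(l\<^sup>2/(2*(1-l/3)))))"
    by (intro ennreal_leI bern_mgf p l)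
  finally show ?thesis by (simp add: p_def)
qed

lemma (in prob_space) bernstein01:
  fixes X :: "'i \<Rightarrow> 'a \<Rightarrow> real" and I :: "'i set"
  assumes fin: "finite I" and indep: "indep_vars (\<lambda>_. borel) X I"
    and bin: "\<And>i \<omega>. i \<in> I \<Longrightarrow> \<omega> \<in> space M \<Longrightarrow> X i \<omega> = 0 \<or> X i \<omega> = 1"
    and L: "L > 0"
    and V: "(\<Sum>i\<in>I. expectation (X i) * (1 - expectation (X i))) \<le> V"
    and thr: "sqrt (2*V*L) + 2*L/3 \<le> thr"
  shows "prob {\<omega>\<in>space M. (\<Sum>i\<in>I. X i \<omega> - expectation (X i)) \<ge> thr} \<le> exp (-L)"
proof -
  define p where "p i = expectation (X i)" for i
  have meas[measurable]: "X i \<in> borel_measurable M" if "i \<in> I" for i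
    using indep that unfolding indep_vars_def by blast
  have p01: "0 \<le> p i \<and> p i \<le> 1" if "i \<in> I" for i
    using bin_expectation[OF meas[OF that] bin[OF that]] by (simp add: p_def)
  have V0: "V \<ge> 0"
    by (rule order_trans[OF _ V], rule sum_nonneg) (use p01 in \<open>auto simp: p_def\<close>)
  obtain l where l: "0 < l" "l < 3" and lb: "V*(l\<^sup>2/(2*(1-l/3))) - l*thr \<le> (- L)"
    using bern_choose[OF V0 L thr] by blast
  define c where "c = l\<^sup>2/(2*(1-l/3))"
  have c0: "c \<ge> 0" using l by (simp add: c_def)
  define f where "f \<omega> = (\<Sum>i\<in>I. X i \<omega> - p i)" for \<omega>
  have fm[measurable]: "f \<in> borel_measurable M" unfolding f_def
    by (intro borel_measurable_sum borel_measurable_diff meas) auto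
  have "ennreal (prob {\<omega>\<in>space M. f \<omega> \<ge> thr}) = emeasure M {\<omega>\<in>space M. f \<omega> \<ge> thr}"
    by (simp add: emeasure_eq_measure)
  also have "\<dots> \<le> ennreal (exp (-l*thr)) * (\<integral>\<^sup>+\<omega>. ennreal (exp (l * f \<omega>)) * indicator (space M) \<omega> \<partial>M)"
    by (intro Chernoff_ineq_nn_integral_ge l) auto
  also have "(\<integral>\<^sup>+\<omega>. ennreal (exp (l * f \<omega>)) * indicator (space M) \<omega> \<partial>M)
      = (\<integral>\<^sup>+\<omega>. (\<Prod>i\<in>I. ennreal (exp (l * (X i \<omega> - p i)))) \<partial>M)"
    by (intro nn_integral_cong)
       (simp_all add: f_def sum_distrib_left exp_sum fin prod_ennreal)
  also have "\<dots> = (\<Prod>i\<in>I. \<integral>\<^sup>+\<omega>. ennreal (exp (l * (X i \<omega> - p i))) \<partial>M)"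
    by (intro indep_vars_nn_integral fin indep_vars_compose2[OF indep]) auto
  also have "ennreal (exp (-l*thr)) * \<dots> \<le> ennreal (exp (-l*thr)) * (\<Prod>i\<in>I. ennreal (exp (p i * (1 - p i) * c)))"
  proof (intro mult_left_mono prod_mono_ennreal)
    fix i assume i: "i \<in> I"
    show "(\<integral>\<^sup>+\<omega>. ennreal (exp (l * (X i \<omega> - p i))) \<partial>M) \<le> ennreal (exp (p i * (1 - p i) * c))"
      unfolding p_def c_def using l by (intro bin_mgf meas[OF i] bin[OF i]) auto
  qed auto
  also have "\<dots> = ennreal (exp (-l*thr) * (\<Prod>i\<in>I. exp (p i * (1 - p i) * c)))"
    by (simp add: prod_ennreal prod_nonneg flip: ennreal_mult)
  also have "exp (-l*thr) * (\<Prod>i\<in>I. exp (p i * (1 - p i) * c)) = exp ((\<Sum>i\<in>I. p i * (1 - p i)) * c - l*thr)"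
  proof -
    have "(\<Prod>i\<in>I. exp (p i * (1 - p i) * c)) = exp (\<Sum>i\<in>I. p i * (1 - p i) * c)"
      by (simp add: exp_sum fin)
    moreover have "(\<Sum>i\<in>I. p i * (1 - p i) * c) = (\<Sum>i\<in>I. p i * (1 - p i)) * c"
      by (simp add: sum_distrib_right)
    ultimately show ?thesis by (simp add: mult_exp_exp)
  qed
  also have "ennreal \<dots> \<le> ennreal (exp (-L))"
  proof -
    have "(\<Sum>i\<in>I. p i * (1 - p i)) * c \<le> V * c" using V c0 by (intro mult_right_mono) (auto simp: p_def)
    thus ?thesis using lb by (intro ennreal_leI) (simp add: c_def)
  qed
  finally have "ennreal (prob {\<omega>\<in>space M. f \<omega> \<ge> thr}) \<le> ennreal (exp (-L))" .
  hence "prob {\<omega>\<in>space M. f \<omega> \<ge> thr} \<le> exp (-L)"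
    by (subst (asm) ennreal_le_iff) auto
  thus ?thesis by (simp add: f_def p_def)
qed

lemma (in prob_space) bernstein01_avg:
  fixes X :: "'i \<Rightarrow> 'a \<Rightarrow> real" and I :: "'i set"
  assumes fin: "finite I" and ne: "I \<noteq> {}" and indep: "indep_vars (\<lambda>_. borel) X I"
    and bin: "\<And>i \<omega>. i \<in> I \<Longrightarrow> \<omega> \<in> space M \<Longrightarrow> X i \<omega> = 0 \<or> X i \<omega> = 1"
    and L: "L > 0"
    and V: "(\<Sum>i\<in>I. expectation (X i) * (1 - expectation (X i))) \<le> real (card I) * vv"
    and ee: "sqrt (2 * vv * L/real (card I)) + 2/3*(L/real (card I)) \<le> ee"
  shows "prob {\<omega>\<in>space M. (\<Sum>i\<in>I. X i \<omega> - expectation (X i)) \<ge> real (card I) * ee} \<le> exp (-L)"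
proof (rule bernstein01[OF fin indep bin L V])
  define n where "n = real (card I)"
  have n: "n > 0" using fin ne by (simp add: n_def card_gt_0_iff)
  have eq: "2 * (n * vv) * L = n\<^sup>2 * (2 * vv * L/n)" using n by (simp add: power2_eq_square field_simps)
  have "sqrt (2 * (n * vv) * L) = sqrt (n\<^sup>2) * sqrt (2 * vv * L/n)" unfolding eq by (rule real_sqrt_mult)
  hence "sqrt (2 * (n * vv) * L) = n * sqrt (2 * vv * L/n)" using n by simp
  moreover have "n * (sqrt (2 * vv * L/n) + 2/3*(L/n)) \<le> n * ee" using ee n by (simp add: n_def)
  ultimately show "sqrt (2 * (real (card I) * vv) * L) + 2 * L / 3 \<le> real (card I) * ee"
    using n by (simp add: n_def[symmetric] algebra_simps)
qed simp

lemma core_ineq: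
  fixes n L p D :: real
  assumes n: "n > 0" and L: "L > 0" and p: "p \<ge> 0" and D: "D \<ge> 0"
  shows "sqrt (2*(p+D)*L/n) + 2/3*(L/n) \<le> sqrt (2*p*L/n) + D/5 + 19/6*(L/n)"
proof -
  have "sqrt (2*(p+D)*L/n) = sqrt (2*p*L/n + 2*D*L/n)" by (simp add: algebra_simps add_divide_distrib)
  also have "\<dots> \<le> sqrt (2*p*L/n) + sqrt (2*D*L/n)"
    using n L p D by (intro sqrt_add_le_add_sqrt) auto
  also have "sqrt (2*D*L/n) \<le> D/5 + 5/2*(L/n)"
  proof -
    have "2*D*L/n \<le> (D/5 + 5/2*(L/n))\<^sup>2"
    proof -
      have "(D/5 - 5/2*(L/n))\<^sup>2 \<ge> 0" by simp
      thus ?thesis by (simp add: power2_eq_square algebra_simps)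
    qed
    hence "sqrt (2*D*L/n) \<le> sqrt ((D/5 + 5/2*(L/n))\<^sup>2)" by (rule real_sqrt_le_mono)
    also have "\<dots> = D/5 + 5/2*(L/n)" using n L D by simp
    finally show ?thesis .
  qed
  finally show ?thesis by simp
qed

lemma var_bound:
  fixes f :: "'i \<Rightarrow> real" and P :: "'i set" and a :: real
  assumes fin: "finite P" and ne: "P \<noteq> {}" and f01: "\<And>q. q \<in> P \<Longrightarrow> 0 \<le> f q \<and> f q \<le> 1"
    and a: "0 \<le> a" "a \<le> 1"
  shows "(\<Sum>q\<in>P. f q * (1 - f q)) \<le> real (card P) * (a*(1-a) + \<bar>(\<Sum>q\<in>P. f q)/real (card P) - a\<bar>)"
proof -
  define n where "n = real (card P)"
  have n: "n > 0" using fin ne by (simp add: n_def card_gt_0_iff)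
  define G where "G = (\<Sum>q\<in>P. f q) / n"
  have sG: "(\<Sum>q\<in>P. f q) = n * G" using n by (simp add: G_def)
  have G0: "0 \<le> G" using f01 n by (auto simp: G_def intro!: sum_nonneg divide_nonneg_pos)
  have "(\<Sum>q\<in>P. f q) \<le> (\<Sum>q\<in>P. 1)" using f01 by (intro sum_mono) auto
  hence G1: "G \<le> 1" using n by (simp add: G_def n_def)
  have "0 \<le> (\<Sum>q\<in>P. (f q - G)\<^sup>2)" by (intro sum_nonneg) simp
  also have "(\<Sum>q\<in>P. (f q - G)\<^sup>2) = (\<Sum>q\<in>P. (f q)\<^sup>2 - 2*G*f q + G\<^sup>2)"
    by (intro sum.cong refl) (simp add: power2_diff algebra_simps)
  also have "\<dots> = (\<Sum>q\<in>P. (f q)\<^sup>2) - 2*G*(\<Sum>q\<in>P. f q) + n * G\<^sup>2"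
    by (simp add: sum.distrib sum_subtractf sum_distrib_left n_def)
  finally have sq: "(\<Sum>q\<in>P. (f q)\<^sup>2) \<ge> n * G\<^sup>2" using sG by (simp add: power2_eq_square algebra_simps)
  have "(\<Sum>q\<in>P. f q * (1 - f q)) = (\<Sum>q\<in>P. f q) - (\<Sum>q\<in>P. (f q)\<^sup>2)"
    by (simp add: algebra_simps power2_eq_square sum_subtractf)
  also have "\<dots> \<le> n * (G * (1 - G))" using sq sG by (simp add: algebra_simps power2_eq_square)
  also have "G * (1 - G) \<le> a*(1-a) + \<bar>G - a\<bar>"
  proof -
    have "G * (1 - G) - a*(1-a) = (G - a) * (1 - G - a)" by (simp add: algebra_simps)
    also have "\<dots> \<le> \<bar>G - a\<bar> * \<bar>1 - G - a\<bar>" by (simp add: abs_mult[symmetric])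
    also have "\<dots> \<le> \<bar>G - a\<bar> * 1" using G0 G1 a by (intro mult_left_mono) auto
    finally show ?thesis by simp
  qed
  hence "n * (G * (1 - G)) \<le> n * (a*(1-a) + \<bar>G - a\<bar>)" using n by simp
  finally show ?thesis by (simp add: G_def n_def)
qed

lemma ivt_cdf_like:
  fixes G :: "real \<Rightarrow> real"
  assumes cont: "continuous_on UNIV G" and lb: "(G \<longlongrightarrow> 0) at_bot" and lt: "(G \<longlongrightarrow> 1) at_top"
    and c: "0 < c" "c < 1"
  shows "\<exists>x. G x = c"
proof -
  have "eventually (\<lambda>x. G x < c) at_bot" using order_tendstoD(2)[OF lb c(1)] .
  then obtain N1 where N1: "\<And>x. x \<le> N1 \<Longrightarrow> G x < c" by (auto simp: eventually_at_bot_linorder)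
  have "eventually (\<lambda>x. G x > c) at_top" using order_tendstoD(1)[OF lt c(2)] .
  then obtain N2 where N2: "\<And>x. x \<ge> N2 \<Longrightarrow> G x > c" by (auto simp: eventually_at_top_linorder)
  have "G (min N1 N2) \<le> c" using N1[of "min N1 N2"] by simp
  moreover have "c \<le> G (max N1 N2)" using N2[of "max N1 N2"] by simp
  moreover have "continuous_on {min N1 N2..max N1 N2} G" using cont by (rule continuous_on_subset) auto
  moreover have "min N1 N2 \<le> max N1 N2" by simp
  ultimately show ?thesis using IVT'[of G "min N1 N2" c "max N1 N2"] by blast
qed

lemma quantile_char:
  fixes v :: "'i \<Rightarrow> real" and P :: "'i set" and cc \<gamma> :: real
  assumes fin: "finite P" and cc: "cc > 0" and \<gamma>: "\<gamma> > 0"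
    and H: "\<And>x. H x = cc * (\<Sum>q\<in>P. (if v q \<le> x then 1 else 0))"
    and ex: "\<exists>x. H x \<ge> \<gamma>"
  shows "\<And>y. Inf {x. H x \<ge> \<gamma>} \<le> y \<longleftrightarrow> H y \<ge> \<gamma>"
proof -
  have mono: "H x \<le> H y" if "x \<le> y" for x y
    unfolding H using that cc by (intro mult_left_mono sum_mono) auto
  define S where "S = {x. H x \<ge> \<gamma>}"
  have red: "\<exists>q\<in>P. v q \<le> x \<and> H (v q) \<ge> \<gamma>" if x: "x \<in> S" for x
  proof -
    define R where "R = {q\<in>P. v q \<le> x}"
    have "R \<noteq> {}"
    proof
      assume "R = {}"
      hence "H x = 0" unfolding H using fin by (auto simp: R_def intro!: sum.neutral)
      thus False using x \<gamma> by (simp add: S_def)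
    qed
    have fR: "finite R" using fin by (simp add: R_def)
    define m where "m = Max (v ` R)"
    have mR: "m \<in> v ` R" using fR \<open>R \<noteq> {}\<close> by (simp add: m_def)
    have mx: "m \<le> x" using mR by (auto simp: R_def)
    have "H m = H x" unfolding H
    proof (intro arg_cong[where f="\<lambda>z. cc * z"] sum.cong refl)
      fix q assume q: "q \<in> P"
      have "v q \<le> m \<longleftrightarrow> v q \<le> x"
      proof
        assume "v q \<le> x" hence "q \<in> R" using q by (simp add: R_def)
        thus "v q \<le> m" using fR by (simp add: m_def)
      qed (use mx in simp)
      thus "(if v q \<le> m then 1 else 0) = (if v q \<le> x then 1 else (0::real))" by simp
    qed
    thus ?thesis using mR x by (auto simp: R_def S_def)
  qed
  define T where "T = {z \<in> v ` P. H z \<ge> \<gamma>}"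
  have fT: "finite T" using fin by (simp add: T_def)
  obtain x0 where "x0 \<in> S" using ex by (auto simp: S_def)
  then have "T \<noteq> {}" using red by (auto simp: T_def)
  define t0 where "t0 = Min T"
  have t0T: "t0 \<in> T" using fT \<open>T \<noteq> {}\<close> by (simp add: t0_def)
  have t0S: "t0 \<in> S" using t0T by (simp add: T_def S_def)
  have t0le: "t0 \<le> x" if xS: "x \<in> S" for x
  proof -
    obtain q where q: "q \<in> P" "v q \<le> x" "H (v q) \<ge> \<gamma>" using red[OF xS] by blast
    hence "v q \<in> T" by (simp add: T_def)
    hence "t0 \<le> v q" using fT by (simp add: t0_def)
    thus ?thesis using q by simp
  qed
  have inf: "Inf S = t0" by (rule cInf_eq_minimum[OF t0S t0le])
  fix y
  show "Inf {x. H x \<ge> \<gamma>} \<le> y \<longleftrightarrow> H y \<ge> \<gamma>"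
  proof
    assume "Inf {x. H x \<ge> \<gamma>} \<le> y"
    hence "t0 \<le> y" using inf by (simp add: S_def)
    hence "H t0 \<le> H y" by (rule mono)
    thus "H y \<ge> \<gamma>" using t0S by (simp add: S_def)
  next
    assume "H y \<ge> \<gamma>"
    hence "t0 \<le> y" using t0le by (simp add: S_def)
    thus "Inf {x. H x \<ge> \<gamma>} \<le> y" using inf by (simp add: S_def)
  qed
qed

theorem theorem2:
  fixes M :: "'a measure" and Q :: "nat \<Rightarrow> real measure"
    and u :: "nat \<Rightarrow> nat \<Rightarrow> 'a \<Rightarrow> real" and B :: "nat \<Rightarrow> nat"
    and t i k :: nat and \<alpha> \<delta> :: real
  assumes "prob_space M"
    and "t \<ge> 1"
    and "0 < \<alpha>" and "\<alpha> < 1"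
    and Q_prob: "\<And>j. j \<in> {1..t} \<Longrightarrow> prob_space (Q j)"
    and Q_sets: "\<And>j. j \<in> {1..t} \<Longrightarrow> sets (Q j) = sets borel"
    and Q_cont: "\<And>j. j \<in> {1..t} \<Longrightarrow> continuous_on UNIV (cdf (Q j))"
    and B_pos: "\<And>j. j \<in> {1..t} \<Longrightarrow> B j \<ge> 1"
    and indep: "prob_space.indep_vars M (\<lambda>_. borel) (\<lambda>(j, l). u j l)
                  {(j, l). j \<in> {1..t} \<and> l \<in> {1..B j}}"
    and distr: "\<And>j l. j \<in> {1..t} \<Longrightarrow> l \<in> {1..B j} \<Longrightarrow> distr M borel (u j l) = Q j"
    and "1 \<le> i" and "i \<le> k" and "k \<le> t"
    and "0 < \<delta>" and "\<delta> < 1"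
  shows "measure M {\<omega> \<in> space M.
           \<bar>emp_cdf B (\<lambda>j l. u j l \<omega>) t i (emp_quantile B (\<lambda>j l. u j l \<omega>) \<alpha> t k) - (1 - \<alpha>)\<bar>
             \<le> 12/5 * phi (\<lambda>j. cdf (Q j)) t k + 6/5 * psi B \<alpha> t k (\<delta>/2)
                + 4/5 * psi B \<alpha> t i (\<delta>/2)} \<ge> 1 - \<delta>"
proof -
  note ik = \<open>1 \<le> i\<close> \<open>i \<le> k\<close> \<open>k \<le> t\<close>
  interpret P: prob_space M by fact
  define a where "a = 1 - \<alpha>"
  define p where "p = \<alpha> * (1 - \<alpha>)"
  define L where "L = ln (4 / \<delta>)"
  define J where "J = {(j, l). j \<in> {1..t} \<and> l \<in> {1..B j}}"
  define U :: "nat \<times> nat \<Rightarrow> 'a \<Rightarrow> real" where "U = (\<lambda>(j, l). u j l)"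
  define W where "W m = Sigma {t-m+1..t} (\<lambda>j. {1..B j})" for m
  define F where "F j = cdf (Q j)" for j
  define N where "N m = real (Bwin B t m)" for m
  define Fh where "Fh m \<omega> x = emp_cdf B (\<lambda>j l. u j l \<omega>) t m x" for m \<omega> x
  define G where "G m x = (\<Sum>q\<in>W m. F (fst q) x) / N m" for m x
  define Z :: "real \<Rightarrow> nat \<times> nat \<Rightarrow> 'a \<Rightarrow> real" where "Z x q \<omega> = (if U q \<omega> \<le> x then 1 else 0)" for x q \<omega>
  define \<phi> where "\<phi> = phi (\<lambda>j. cdf (Q j)) t k"
  have a: "0 < a" "a < 1" using \<open>0 < \<alpha>\<close> \<open>\<alpha> < 1\<close> by (auto simp: a_def)
  have p: "p \<ge> 0" "a * (1 - a) = p" using a by (auto simp: p_def a_def)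
  have L: "L > 0" using \<open>0 < \<delta>\<close> \<open>\<delta> < 1\<close> by (simp add: L_def)
  have expL: "exp (-L) = \<delta>/4" using \<open>0 < \<delta>\<close> by (simp add: L_def exp_minus)
  have indepU: "P.indep_vars (\<lambda>_. borel) U J" using indep by (simp add: U_def J_def)
  have rv[measurable]: "U q \<in> borel_measurable M" if "q \<in> J" for q
    using indepU that unfolding P.indep_vars_def by blast
  have WJ: "W m \<subseteq> J" if "m \<le> t" for m using that by (auto simp: W_def J_def)
  have Wfin: "finite (W m)" for m by (simp add: W_def)
  have Wne: "W m \<noteq> {}" if "1 \<le> m" "m \<le> t" for m
  proof -
    have "(t, 1) \<in> W m" using that B_pos[of t] by (auto simp: W_def)
    thus ?thesis by blast
  qed
  have cardW: "real (card (W m)) = N m" for m by (simp add: W_def N_def Bwin_def)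
  have Npos: "N m > 0" if "1 \<le> m" "m \<le> t" for m
    using Wne[OF that] Wfin[of m] cardW[of m] by (metis card_gt_0_iff of_nat_0_less_iff)
  have Fh_eq: "Fh m \<omega> x = (\<Sum>q\<in>W m. Z x q \<omega>) / N m" for m \<omega> x
    by (simp add: Fh_def emp_cdf_def N_def W_def Z_def U_def sum.Sigma case_prod_unfold)
  have Zbin: "Z x q \<omega> = 0 \<or> Z x q \<omega> = 1" for x q \<omega> by (simp add: Z_def)
  have Zm[measurable]: "Z x q \<in> borel_measurable M" if "q \<in> J" for x q
    using rv[OF that] unfolding Z_def by measurable
  have EZ: "P.expectation (Z x q) = F (fst q) x" if q: "q \<in> J" for x q
  proof -
    obtain j l where jl: "q = (j, l)" "j \<in> {1..t}" "l \<in> {1..B j}" using q by (auto simp: J_def)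
    have "P.expectation (Z x q) = P.expectation (indicator {\<omega>\<in>space M. U q \<omega> \<le> x})"
      by (intro Bochner_Integration.integral_cong) (auto simp: Z_def)
    also have "\<dots> = measure M {\<omega>\<in>space M. U q \<omega> \<le> x}" by (simp, intro arg_cong[where f="measure M"]) auto
    also have "\<dots> = measure (distr M borel (U q)) {..x}"
      using rv[OF q] by (subst measure_distr) (auto intro!: arg_cong[where f="measure M"])
    also have "\<dots> = F (fst q) x" using distr[OF jl(2,3)] jl(1) by (simp add: F_def U_def cdf_def)
    finally show ?thesis .
  qed
  have RD: "real_distribution (Q j)" if "j \<in> {1..t}" for j
    using Q_prob[OF that] Q_sets[OF that]
    by (simp add: real_distribution_def real_distribution_axioms_def)
  have F01: "0 \<le> F j x \<and> F j x \<le> 1" if "j \<in> {1..t}" for j x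
  proof -
    interpret R: prob_space "Q j" using Q_prob[OF that] .
    show ?thesis by (simp add: F_def cdf_def R.prob_le_1)
  qed
  have Fmono: "F j x \<le> F j y" if "j \<in> {1..t}" "x \<le> y" for j x y
  proof -
    interpret R: real_distribution "Q j" using RD[OF that(1)] .
    show ?thesis using R.cdf_nondecreasing[OF that(2)] by (simp add: F_def)
  qed
  have fstW: "fst q \<in> {1..t}" if "q \<in> W m" "m \<le> t" for q m using WJ[OF that(2)] that(1) by (auto simp: J_def)
  have tail_up: "P.prob {\<omega>\<in>space M. Fh m \<omega> x \<ge> G m x + ee} \<le> exp (-L)"
    if m: "1 \<le> m" "m \<le> t" and D: "\<bar>G m x - a\<bar> \<le> D"
      and ee: "sqrt (2*(p+D)*L/N m) + 2/3*(L/N m) \<le> ee" for m x D ee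
  proof -
    have indepZ: "P.indep_vars (\<lambda>_. borel) (Z x) (W m)"
      using P.indep_vars_compose2[OF P.indep_vars_subset[OF indepU WJ[OF m(2)]],
              of "\<lambda>q v. if v \<le> x then 1 else (0::real)" "\<lambda>_. borel"]
      by (simp add: Z_def[abs_def])
    have EZm: "P.expectation (Z x q) = F (fst q) x" if "q \<in> W m" for q using EZ WJ[OF m(2)] that by blast
    have V: "(\<Sum>q\<in>W m. P.expectation (Z x q) * (1 - P.expectation (Z x q))) \<le> real (card (W m)) * (p + D)"
    proof -
      have "(\<Sum>q\<in>W m. P.expectation (Z x q) * (1 - P.expectation (Z x q)))
          = (\<Sum>q\<in>W m. F (fst q) x * (1 - F (fst q) x))" by (intro sum.cong refl) (simp add: EZm)
      also have "\<dots> \<le> real (card (W m)) * (a*(1-a) + \<bar>(\<Sum>q\<in>W m. F (fst q) x)/real (card (W m)) - a\<bar>)"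
        using a by (intro var_bound Wfin Wne m F01 fstW[OF _ m(2)]) auto
      also have "\<dots> \<le> real (card (W m)) * (p + D)"
        using D p Npos[OF m] by (intro mult_left_mono) (auto simp: cardW G_def)
      finally show ?thesis .
    qed
    have "P.prob {\<omega>\<in>space M. (\<Sum>q\<in>W m. Z x q \<omega> - P.expectation (Z x q)) \<ge> real (card (W m)) * ee} \<le> exp (-L)"
      by (rule P.bernstein01_avg[OF Wfin Wne[OF m] indepZ Zbin L V]) (use ee in \<open>simp add: cardW\<close>)
    also have "{\<omega>\<in>space M. (\<Sum>q\<in>W m. Z x q \<omega> - P.expectation (Z x q)) \<ge> real (card (W m)) * ee}
        = {\<omega>\<in>space M. Fh m \<omega> x \<ge> G m x + ee}"
    proof -
      have "(\<Sum>q\<in>W m. Z x q \<omega> - P.expectation (Z x q)) \<ge> N m * ee \<longleftrightarrow> Fh m \<omega> x \<ge> G m x + ee" for \<omega>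
      proof -
        have eq: "(\<Sum>q\<in>W m. Z x q \<omega> - P.expectation (Z x q)) = N m * (Fh m \<omega> x - G m x)"
          using Npos[OF m] by (simp add: sum_subtractf EZm Fh_eq G_def field_simps)
        have "N m * ee \<le> N m * (Fh m \<omega> x - G m x) \<longleftrightarrow> ee \<le> Fh m \<omega> x - G m x"
          using Npos[OF m] by (rule mult_le_cancel_left_pos)
        thus ?thesis using eq by linarith
      qed
      thus ?thesis by (simp add: cardW)
    qed
    finally show ?thesis .
  qed
  have tail_down: "P.prob {\<omega>\<in>space M. Fh m \<omega> x \<le> G m x - ee} \<le> exp (-L)"
    if m: "1 \<le> m" "m \<le> t" and D: "\<bar>G m x - a\<bar> \<le> D"
      and ee: "sqrt (2*(p+D)*L/N m) + 2/3*(L/N m) \<le> ee" for m x D ee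
  proof -
    define Z' where "Z' q \<omega> = 1 - Z x q \<omega>" for q \<omega>
    have indepZ: "P.indep_vars (\<lambda>_. borel) Z' (W m)"
      using P.indep_vars_compose2[OF P.indep_vars_subset[OF indepU WJ[OF m(2)]],
              of "\<lambda>q v. if v \<le> x then 0 else (1::real)" "\<lambda>_. borel"]
      by (simp add: Z'_def[abs_def] Z_def if_distrib cong: if_cong)
    have Zbin': "Z' q \<omega> = 0 \<or> Z' q \<omega> = 1" for q \<omega> using Zbin[of x q \<omega>] by (auto simp: Z'_def)
    have EZm: "P.expectation (Z' q) = 1 - F (fst q) x" if "q \<in> W m" for q
    proof -
      have q: "q \<in> J" using WJ[OF m(2)] that by blast
      have "P.expectation (Z' q) = P.expectation (\<lambda>_. 1) - P.expectation (Z x q)"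
        unfolding Z'_def using P.bin_expectation(1)[OF Zm[OF q] Zbin]
        by (subst Bochner_Integration.integral_diff) auto
      thus ?thesis using EZ[OF q] by (simp add: P.prob_space)
    qed
    have V: "(\<Sum>q\<in>W m. P.expectation (Z' q) * (1 - P.expectation (Z' q))) \<le> real (card (W m)) * (p + D)"
    proof -
      have "(\<Sum>q\<in>W m. P.expectation (Z' q) * (1 - P.expectation (Z' q)))
          = (\<Sum>q\<in>W m. F (fst q) x * (1 - F (fst q) x))" by (intro sum.cong refl) (simp add: EZm algebra_simps)
      also have "\<dots> \<le> real (card (W m)) * (a*(1-a) + \<bar>(\<Sum>q\<in>W m. F (fst q) x)/real (card (W m)) - a\<bar>)"
        using a by (intro var_bound Wfin Wne m F01 fstW[OF _ m(2)]) auto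
      also have "\<dots> \<le> real (card (W m)) * (p + D)"
        using D p Npos[OF m] by (intro mult_left_mono) (auto simp: cardW G_def)
      finally show ?thesis .
    qed
    have "P.prob {\<omega>\<in>space M. (\<Sum>q\<in>W m. Z' q \<omega> - P.expectation (Z' q)) \<ge> real (card (W m)) * ee} \<le> exp (-L)"
      by (rule P.bernstein01_avg[OF Wfin Wne[OF m] indepZ Zbin' L V]) (use ee in \<open>simp add: cardW\<close>)
    also have "{\<omega>\<in>space M. (\<Sum>q\<in>W m. Z' q \<omega> - P.expectation (Z' q)) \<ge> real (card (W m)) * ee}
        = {\<omega>\<in>space M. Fh m \<omega> x \<le> G m x - ee}"
    proof -
      have "(\<Sum>q\<in>W m. Z' q \<omega> - P.expectation (Z' q)) \<ge> N m * ee \<longleftrightarrow> Fh m \<omega> x \<le> G m x - ee" for \<omega>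
      proof -
        have "(\<Sum>q\<in>W m. Z' q \<omega> - P.expectation (Z' q)) = (\<Sum>q\<in>W m. F (fst q) x - Z x q \<omega>)"
          by (intro sum.cong refl) (simp add: EZm Z'_def)
        also have "\<dots> = N m * (G m x - Fh m \<omega> x)"
          using Npos[OF m] by (simp add: sum_subtractf Fh_eq G_def field_simps)
        finally have eq: "(\<Sum>q\<in>W m. Z' q \<omega> - P.expectation (Z' q)) = N m * (G m x - Fh m \<omega> x)" .
        have "N m * ee \<le> N m * (G m x - Fh m \<omega> x) \<longleftrightarrow> ee \<le> G m x - Fh m \<omega> x"
          using Npos[OF m] by (rule mult_le_cancel_left_pos)
        thus ?thesis using eq by linarith
      qed
      thus ?thesis by (simp add: cardW)
    qed
    finally show ?thesis .
  qed
  have Fh_mono: "Fh m \<omega> x \<le> Fh m \<omega> y" if m: "1 \<le> m" "m \<le> t" and xy: "x \<le> y" for m \<omega> x y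
    unfolding Fh_eq using Npos[OF m] xy by (intro divide_right_mono sum_mono) (auto simp: Z_def)
  have Fh01: "0 \<le> Fh m \<omega> x \<and> Fh m \<omega> x \<le> 1" if m: "1 \<le> m" "m \<le> t" for m \<omega> x
  proof
    show "0 \<le> Fh m \<omega> x" unfolding Fh_eq using Npos[OF m] by (intro divide_nonneg_pos sum_nonneg) (auto simp: Z_def)
    have "(\<Sum>q\<in>W m. Z x q \<omega>) \<le> (\<Sum>q\<in>W m. 1)" by (intro sum_mono) (auto simp: Z_def)
    also have "\<dots> = N m" using cardW[of m] by simp
    finally show "Fh m \<omega> x \<le> 1" unfolding Fh_eq using Npos[OF m] by simp
  qed
  have tk: "t \<in> {1..t}" using \<open>t \<ge> 1\<close> by simp
  have phi_eq: "\<phi> = Max ((\<lambda>j. sup_dist (F j) (F t)) ` {t-k+1..t})"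
    by (simp add: \<phi>_def phi_def F_def)
  have phi_bd: "\<bar>F j x - F t x\<bar> \<le> \<phi>" if j: "j \<in> {t-k+1..t}" for j x
  proof -
    have j1: "j \<in> {1..t}" using j ik by auto
    have bdd: "bdd_above (range (\<lambda>x. \<bar>F j x - F t x\<bar>))"
    proof (rule bdd_aboveI2)
      fix y show "\<bar>F j y - F t y\<bar> \<le> 1" using F01[OF j1, of y] F01[OF tk, of y] by auto
    qed
    have "\<bar>F j x - F t x\<bar> \<le> sup_dist (F j) (F t)" unfolding sup_dist_def by (rule cSUP_upper[OF UNIV_I bdd])
    also have "\<dots> \<le> \<phi>" unfolding phi_eq using j by (intro Max_ge) auto
    finally show ?thesis .
  qed
  have phi0: "\<phi> \<ge> 0" using phi_bd[of t 0] ik by auto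
  have G_bd: "\<bar>G m x - F t x\<bar> \<le> \<phi>" if m: "1 \<le> m" "m \<le> k" for m x
  proof -
    have mt: "m \<le> t" using m ik by simp
    have "G m x - F t x = (\<Sum>q\<in>W m. F (fst q) x - F t x) / N m"
      using Npos[OF m(1) mt] cardW[of m] by (simp add: G_def sum_subtractf field_simps)
    hence "\<bar>G m x - F t x\<bar> = \<bar>\<Sum>q\<in>W m. F (fst q) x - F t x\<bar> / N m" using Npos[OF m(1) mt] by simp
    also have "\<dots> \<le> (\<Sum>q\<in>W m. \<phi>) / N m"
    proof (intro divide_right_mono order_trans[OF sum_abs] sum_mono)
      fix q assume "q \<in> W m"
      hence "fst q \<in> {t-k+1..t}" using m ik by (auto simp: W_def)
      thus "\<bar>F (fst q) x - F t x\<bar> \<le> \<phi>" by (rule phi_bd)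
    qed (use Npos[OF m(1) mt] in simp)
    also have "\<dots> = \<phi>" using Npos[OF m(1) mt] cardW[of m] by simp
    finally show ?thesis .
  qed
  have Gik: "\<bar>G i x - G k x\<bar> \<le> 2 * \<phi>" for x
    using G_bd[of i x] G_bd[of k x] ik by auto
  have kt: "1 \<le> k" "k \<le> t" using ik by auto
  have it: "1 \<le> i" "i \<le> t" using ik by auto
  have Gk_fun: "G k = (\<lambda>x. (\<Sum>q\<in>W k. F (fst q) x) / N k)" by (simp add: G_def fun_eq_iff)
  have Gk_cont: "continuous_on UNIV (G k)"
    unfolding Gk_fun using Npos[OF kt] fstW[OF _ kt(2)]
    by (intro continuous_on_divide continuous_on_sum continuous_on_const) (auto simp: F_def intro!: Q_cont)
  have Gk_bot: "(G k \<longlongrightarrow> 0) at_bot"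
  proof -
    have "((\<lambda>x. (\<Sum>q\<in>W k. F (fst q) x) / N k) \<longlongrightarrow> (\<Sum>q\<in>W k. 0) / N k) at_bot"
    proof (intro tendsto_divide tendsto_sum tendsto_const)
      fix q assume "q \<in> W k"
      hence j: "fst q \<in> {1..t}" using fstW kt by blast
      interpret R: real_distribution "Q (fst q)" using RD[OF j] .
      show "((\<lambda>x. F (fst q) x) \<longlongrightarrow> 0) at_bot" using R.cdf_lim_at_bot by (simp add: F_def)
    qed (use Npos[OF kt] in simp)
    thus ?thesis unfolding Gk_fun by simp
  qed
  have Gk_top: "(G k \<longlongrightarrow> 1) at_top"
  proof -
    have "((\<lambda>x. (\<Sum>q\<in>W k. F (fst q) x) / N k) \<longlongrightarrow> (\<Sum>q\<in>W k. 1) / N k) at_top"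
    proof (intro tendsto_divide tendsto_sum tendsto_const)
      fix q assume "q \<in> W k"
      hence j: "fst q \<in> {1..t}" using fstW kt by blast
      interpret R: real_distribution "Q (fst q)" using RD[OF j] .
      show "((\<lambda>x. F (fst q) x) \<longlongrightarrow> 1) at_top" using R.cdf_lim_at_top_prob by (simp add: F_def)
    qed (use Npos[OF kt] in simp)
    moreover have "(\<Sum>q\<in>W k. 1) / N k = (1::real)" using cardW[of k] Npos[OF kt] by simp
    ultimately show ?thesis unfolding Gk_fun by simp
  qed
  define qh where "qh \<omega> = emp_quantile B (\<lambda>j l. u j l \<omega>) \<alpha> t k" for \<omega>
  have qchar: "qh \<omega> \<le> y \<longleftrightarrow> Fh k \<omega> y \<ge> a" for \<omega> y
  proof -
    have qh_eq: "qh \<omega> = Inf {x. Fh k \<omega> x \<ge> a}"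
      by (simp add: qh_def emp_quantile_def left_quantile_def Fh_def a_def)
    have H: "Fh k \<omega> x = (1 / N k) * (\<Sum>q\<in>W k. (if U q \<omega> \<le> x then 1 else 0))" for x
      by (simp add: Fh_eq Z_def)
    define x0 where "x0 = (\<Sum>q\<in>W k. \<bar>U q \<omega>\<bar>)"
    have "U q \<omega> \<le> x0" if "q \<in> W k" for q
    proof -
      have "\<bar>U q \<omega>\<bar> \<le> x0" unfolding x0_def by (rule member_le_sum[OF that]) (auto simp: Wfin)
      thus ?thesis by simp
    qed
    hence "Fh k \<omega> x0 = 1" using cardW[of k] Npos[OF kt] by (simp add: H)
    hence ex: "\<exists>x. Fh k \<omega> x \<ge> a" using a by (intro exI[of _ x0]) simp
    show ?thesis unfolding qh_eq
      by (rule quantile_char[OF Wfin _ a(1) H ex]) (use Npos[OF kt] in simp)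
  qed
  have Fhm: "(\<lambda>\<omega>. Fh m \<omega> y) \<in> borel_measurable M" if m: "m \<le> t" for m y
    unfolding Fh_eq using WJ[OF m]
    by (intro borel_measurable_divide borel_measurable_sum borel_measurable_const Zm) auto
  have qhm[measurable]: "qh \<in> borel_measurable M"
  proof (subst borel_measurable_iff_le, intro allI)
    fix y
    have "{w \<in> space M. qh w \<le> y} = {w \<in> space M. Fh k w y \<ge> a}" using qchar by blast
    also have "\<dots> \<in> sets M" using Fhm[OF kt(2), of y] by measurable
    finally show "{w \<in> space M. qh w \<le> y} \<in> sets M" .
  qed
  define f where "f \<omega> = Fh i \<omega> (qh \<omega>)" for \<omega>
  have fm[measurable]: "f \<in> borel_measurable M"
  proof -
    have "f = (\<lambda>\<omega>. (\<Sum>q\<in>W i. (if U q \<omega> \<le> qh \<omega> then 1 else 0)) / N i)"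
      by (simp add: f_def Fh_eq Z_def fun_eq_iff)
    also have "\<dots> \<in> borel_measurable M"
    proof (intro borel_measurable_divide borel_measurable_sum borel_measurable_const)
      fix q assume "q \<in> W i"
      hence q: "q \<in> J" using WJ[OF it(2)] by blast
      note [measurable] = rv[OF q]
      show "(\<lambda>\<omega>. if U q \<omega> \<le> qh \<omega> then 1 else 0::real) \<in> borel_measurable M" by measurable
    qed
    finally show ?thesis .
  qed
  define sN where "sN m = sqrt (2*p*L/N m)" for m
  define ek where "ek = 5/4 * sN k + 95/24 * (L / N k)"
  define D2 where "D2 = ek + 2*\<phi>"
  define ei where "ei = sN i + D2/5 + 19/6 * (L / N i)"
  define bnd where "bnd = 12/5 * phi (\<lambda>j. cdf (Q j)) t k + 6/5 * psi B \<alpha> t k (\<delta>/2) + 4/5 * psi B \<alpha> t i (\<delta>/2)"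
  have psi_eq: "psi B \<alpha> t m (\<delta>/2) = 5/4 * sN m + 4 * (L / N m)" for m
    by (simp add: psi_def sN_def p_def L_def N_def mult.assoc)
  have sN0: "sN m \<ge> 0" for m using p(1) L by (simp add: sN_def N_def)
  have rN: "L / N k > 0" "L / N i > 0" using L Npos[OF kt] Npos[OF it] by auto
  have ek0: "ek > 0" using sN0[of k] rN by (simp add: ek_def)
  have D20: "D2 \<ge> 0" using ek0 phi0 by (simp add: D2_def)
  have ei0: "ei \<ge> 0" using sN0[of i] D20 rN by (simp add: ei_def)
  have bnd_ge: "2*\<phi> + ek + ei \<le> bnd"
  proof -
    have gen: "2*ph + (5/4* s1 + 95/24*r1) + (s2 + (5/4* s1+95/24*r1 + 2*ph)/5 + 19/6*r2)
       \<le> 12/5*ph + 6/5*(5/4* s1 + 4*r1) + 4/5*(5/4* s2 + 4*r2)" if "0 < r1" "0 < r2" for ph s1 s2 r1 r2 :: real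
      using that by (simp add: field_simps)
    show ?thesis unfolding bnd_def psi_eq \<phi>_def[symmetric] ei_def D2_def ek_def using gen rN by blast
  qed
  have condK: "sqrt (2*(p+ek)*L/N k) + 2/3*(L/N k) \<le> ek"
  proof -
    have "sqrt (2*(p+ek)*L/N k) + 2/3*(L/N k) \<le> sqrt (2*p*L/N k) + ek/5 + 19/6*(L/N k)"
      by (rule core_ineq[OF Npos[OF kt] L p(1)]) (use ek0 in simp)
    moreover have "sqrt (2*p*L/N k) + ek/5 + 19/6*(L/N k) = ek"
    proof -
      have gen: "s1 + (5/4 * s1 + 95/24 * r1)/5 + 19/6 * r1 = 5/4 * s1 + 95/24 * r1" for s1 r1 :: real
        by (simp add: field_simps)
      show ?thesis unfolding ek_def sN_def by (rule gen)
    qed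
    ultimately show ?thesis by linarith
  qed
  have condI: "sqrt (2*(p+D2)*L/N i) + 2/3*(L/N i) \<le> ei"
  proof -
    have "sqrt (2*(p+D2)*L/N i) + 2/3*(L/N i) \<le> sqrt (2*p*L/N i) + D2/5 + 19/6*(L/N i)"
      by (rule core_ineq[OF Npos[OF it] L p(1) D20])
    thus ?thesis by (simp add: ei_def sN_def)
  qed
  have Fhm'[measurable]: "(\<lambda>\<omega>. Fh k \<omega> y) \<in> borel_measurable M" "(\<lambda>\<omega>. Fh i \<omega> y) \<in> borel_measurable M" for y
    using Fhm kt it by auto
  have lo: "P.prob {\<omega>\<in>space M. f \<omega> < a - bnd} \<le> \<delta>/2"
  proof (cases "a - ek \<le> 0")
    case True
    have eq: "{\<omega>\<in>space M. f \<omega> < a - bnd} = {}"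
    proof -
      have "f \<omega> \<ge> a - bnd" for \<omega> using Fh01[OF it, of \<omega> "qh \<omega>"] True bnd_ge phi0 ei0 by (simp add: f_def)
      thus ?thesis by (auto simp: not_less[symmetric])
    qed
    show ?thesis unfolding eq using \<open>0 < \<delta>\<close> by simp
  next
    case False
    obtain xlo where xlo: "G k xlo = a - ek"
      using ivt_cdf_like[OF Gk_cont Gk_bot Gk_top, of "a - ek"] False a ek0 by auto
    define E1 where "E1 = {\<omega>\<in>space M. Fh k \<omega> xlo \<ge> G k xlo + ek}"
    define E3 where "E3 = {\<omega>\<in>space M. Fh i \<omega> xlo \<le> G i xlo - ei}"
    have sub: "{\<omega>\<in>space M. f \<omega> < a - bnd} \<subseteq> E1 \<union> E3"
    proof (rule subsetI, rule ccontr)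
      fix \<omega> assume w: "\<omega> \<in> {\<omega>\<in>space M. f \<omega> < a - bnd}" and nE: "\<omega> \<notin> E1 \<union> E3"
      have "Fh k \<omega> xlo < a" using nE w xlo by (auto simp: E1_def)
      hence "xlo \<le> qh \<omega>" using qchar[of \<omega> xlo] by auto
      hence "Fh i \<omega> xlo \<le> f \<omega>" using Fh_mono[OF it] unfolding f_def by blast
      moreover have "Fh i \<omega> xlo > G i xlo - ei" using nE w by (auto simp: E3_def)
      moreover have "G i xlo \<ge> G k xlo - 2*\<phi>" using Gik[of xlo] by auto
      ultimately show False using w xlo bnd_ge by auto
    qed
    have E1m: "E1 \<in> sets M" unfolding E1_def by measurable
    have E3m: "E3 \<in> sets M" unfolding E3_def by measurable
    have "P.prob {\<omega>\<in>space M. f \<omega> < a - bnd} \<le> P.prob (E1 \<union> E3)"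
      by (rule P.finite_measure_mono[OF sub]) (use E1m E3m in auto)
    also have "\<dots> \<le> P.prob E1 + P.prob E3" by (rule measure_Un_le[OF E1m E3m])
    finally have 1: "P.prob {\<omega>\<in>space M. f \<omega> < a - bnd} \<le> P.prob E1 + P.prob E3" .
    have 2: "P.prob E1 \<le> exp (-L)" unfolding E1_def
      by (rule tail_up[OF kt _ condK]) (use ek0 xlo in simp)
    have 3: "P.prob E3 \<le> exp (-L)" unfolding E3_def
      by (rule tail_down[OF it _ condI]) (use ek0 xlo Gik[of xlo] in \<open>auto simp: D2_def\<close>)
    show ?thesis using 1 2 3 expL by simp
  qed
  have hi: "P.prob {\<omega>\<in>space M. f \<omega> > a + bnd} \<le> \<delta>/2"
  proof (cases "a + ek \<ge> 1")
    case True
    have eq: "{\<omega>\<in>space M. f \<omega> > a + bnd} = {}"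
    proof -
      have "f \<omega> \<le> a + bnd" for \<omega> using Fh01[OF it, of \<omega> "qh \<omega>"] True bnd_ge phi0 ei0 by (simp add: f_def)
      thus ?thesis by (auto simp: not_less[symmetric])
    qed
    show ?thesis unfolding eq using \<open>0 < \<delta>\<close> by simp
  next
    case False
    obtain xhi where xhi: "G k xhi = a + ek"
      using ivt_cdf_like[OF Gk_cont Gk_bot Gk_top, of "a + ek"] False a ek0 by auto
    define E2 where "E2 = {\<omega>\<in>space M. Fh k \<omega> xhi \<le> G k xhi - ek}"
    define E4 where "E4 = {\<omega>\<in>space M. Fh i \<omega> xhi \<ge> G i xhi + ei}"
    have sub: "{\<omega>\<in>space M. f \<omega> > a + bnd} \<subseteq> E2 \<union> E4"
    proof (rule subsetI, rule ccontr)
      fix \<omega> assume w: "\<omega> \<in> {\<omega>\<in>space M. f \<omega> > a + bnd}" and nE: "\<omega> \<notin> E2 \<union> E4"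
      have "Fh k \<omega> xhi \<ge> a" using nE w xhi by (auto simp: E2_def)
      hence "qh \<omega> \<le> xhi" using qchar[of \<omega> xhi] by auto
      hence "f \<omega> \<le> Fh i \<omega> xhi" using Fh_mono[OF it] unfolding f_def by blast
      moreover have "Fh i \<omega> xhi < G i xhi + ei" using nE w by (auto simp: E4_def)
      moreover have "G i xhi \<le> G k xhi + 2*\<phi>" using Gik[of xhi] by auto
      ultimately show False using w xhi bnd_ge by auto
    qed
    have E2m: "E2 \<in> sets M" unfolding E2_def by measurable
    have E4m: "E4 \<in> sets M" unfolding E4_def by measurable
    have "P.prob {\<omega>\<in>space M. f \<omega> > a + bnd} \<le> P.prob (E2 \<union> E4)"
      by (rule P.finite_measure_mono[OF sub]) (use E2m E4m in auto)
    also have "\<dots> \<le> P.prob E2 + P.prob E4" by (rule measure_Un_le[OF E2m E4m])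
    finally have 1: "P.prob {\<omega>\<in>space M. f \<omega> > a + bnd} \<le> P.prob E2 + P.prob E4" .
    have 2: "P.prob E2 \<le> exp (-L)" unfolding E2_def
      by (rule tail_down[OF kt _ condK]) (use ek0 xhi in simp)
    have 3: "P.prob E4 \<le> exp (-L)" unfolding E4_def
      by (rule tail_up[OF it _ condI]) (use ek0 xhi Gik[of xhi] in \<open>auto simp: D2_def\<close>)
    show ?thesis using 1 2 3 expL by simp
  qed
  define Bad where "Bad = {\<omega>\<in>space M. f \<omega> < a - bnd} \<union> {\<omega>\<in>space M. f \<omega> > a + bnd}"
  have Badm: "Bad \<in> sets M" unfolding Bad_def by measurable
  have "P.prob Bad \<le> P.prob {\<omega>\<in>space M. f \<omega> < a - bnd} + P.prob {\<omega>\<in>space M. f \<omega> > a + bnd}"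
    unfolding Bad_def by (rule measure_Un_le) measurable
  hence PB: "P.prob Bad \<le> \<delta>" using lo hi by simp
  have set_eq: "{\<omega> \<in> space M.
           \<bar>emp_cdf B (\<lambda>j l. u j l \<omega>) t i (emp_quantile B (\<lambda>j l. u j l \<omega>) \<alpha> t k) - (1 - \<alpha>)\<bar>
             \<le> 12/5 * phi (\<lambda>j. cdf (Q j)) t k + 6/5 * psi B \<alpha> t k (\<delta>/2)
                + 4/5 * psi B \<alpha> t i (\<delta>/2)} = space M - Bad"
    by (auto simp: Bad_def f_def Fh_def qh_def a_def bnd_def abs_le_iff)
  show ?thesis unfolding set_eq using P.prob_compl[OF Badm] PB by simp
qed

end
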